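(* In the setting described in the context, let $\varepsilon\in(0,1)$, $\Omega_n=((1-\varepsilon)\Sigma_n+\varepsilon I)^{-1}$, $\mathbf c=\mathrm{vec}(\mathbf C^\top)$, and define the $n^2\times n^2$ matrix $$\widetilde\Omega_n=\frac1\varepsilon\mathbf I_{n^2}-\frac{1-\varepsilon}{\varepsilon}\mathbf T\big(\varepsilon\mathbf I_{2n+4}+(1-\varepsilon)\mathbf U^\top\mathbf T\big)^{-1}\mathbf U^\top.$$ Then $\Omega_n(\bar\psi_n)=\sum_{i,j}b_{ij}\Lambda_{x_i,y_j}$, where the coefficients $b_{ij}$ form a matrix $\mathbf B\in\mathbb{R}^{n\times n}$ satisfying $\mathbf b^\top:=[\mathrm{vec}(\mathbf B^\top)]^\top=\mathbf c^\top\widetilde\Omega_n$.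
   Context: $k,\ell$ bounded kernels on $\mathcal{X},\mathcal{Y}$ with feature maps $K_x,L_y$; $\mathcal{H}=\mathcal{H}_\mathcal{X}\otimes\mathcal{H}_\mathcal{Y}$ real separable tensor-product RKHS with feature map $\Lambda_{x,y}=K_x\otimes L_y$. Data $z_i=(x_i,a_i,y_i)$, $i\in[n]$; $[n]$ partitioned into folds $\mathcal{I}^1,\mathcal{I}^2$ of sizes $n_1,n_2$; $s(i)$ the fold containing $i$, $r(i)=3-s(i)$. For $r\in\{1,2\}$: $\pi^r_n:\mathcal{X}\to(0,1)$, $\theta^r_{n,a}(x)=\sum_j[\boldsymbol\beta^r_a(x)]_j\Lambda_{x,y_j}$ with $[\boldsymbol\beta^r_a(x)]_j=0$ if $j\notin\mathcal{I}^r$ or $a_j\ne a$; $w_i=\pi^{r(i)}_n(x_i)$. With $s=3-r$: $\psi^r_n=\frac1{n_s}\sum_{i\in\mathcal{I}^s}[\theta^r_{n,1}(x_i)-\theta^r_{n,0}(x_i)]$; $\phi^r_n(z)=(\frac{a}{\pi^r_n(x)}-\frac{1-a}{1-\pi^r_n(x)})(\Lambda_{x,y}-\theta^r_{n,a}(x))+\theta^r_{n,1}(x)-\theta^r_{n,0}(x)-\psi^r_n$; $\bar\psi_n=\frac12\sum_r(\psi^r_n+\frac1{n_s}\sum_{i\in\mathcal{I}^s}\phi^r_n(z_i))$; $\Sigma_n(h)=\frac12\sum_r\frac1{n_s}\sum_{i\in\mathcal{I}^s}\langle\phi^r_n(z_i),h\rangle_{\mathcal{H}}\phi^r_n(z_i)$.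 Matrices: $[\mathbf K]_{ij}=k(x_i,x_j)$, $[\mathbf L]_{ij}=\ell(y_i,y_j)$, $\mathbf G=\mathbf K\otimes\mathbf L$. $\mathbf C$: $[\mathbf C]_{ii}=\frac1{2n_{s(i)}}(\frac{a_i}{w_i}-\frac{1-a_i}{1-w_i})$, and for $j\ne i$, $[\mathbf C]_{ij}=\frac1{2n_{s(i)}}[(1-\frac{a_i}{w_i})[\boldsymbol\beta^{r(i)}_1(x_i)]_j+(\frac{1-a_i}{1-w_i}-1)[\boldsymbol\beta^{r(i)}_0(x_i)]_j]$. $\mathbf E$: $[\mathbf E]_{ii}=0$, and for $j\ne i$, $[\mathbf E]_{ij}=\frac1{2n_{s(i)}}([\boldsymbol\beta^{r(i)}_1(x_i)]_j-[\boldsymbol\beta^{r(i)}_0(x_i)]_j)$. For $s\in\{1,2\}$: $[\mathbf D^s]_{ij}=\mathbf 1\{i\in\mathcal{I}^s\}\sqrt{2n_s}[\mathbf C]_{ij}$, $[\mathbf V^s]_{ij}=\mathbf 1\{i\in\mathcal{I}^s\}\sqrt{2/n_s}[\mathbf E]_{ij}$, $\mathbf W^s=\mathbf D^s-n_s\mathbf V^s$; $\mathbf d^s,\mathbf v^s,\mathbf w^s$ their row-wise vectorizations $\mathrm{vec}(\mathbf M^\top)\in\mathbb{R}^{n^2}$; $\mathbf S^s=(\mathbf I_n\bullet\mathbf D^s)^\top$, where the $i$-th row of the face-splitting product $\mathbf A\bullet\mathbf B$ is $\mathbf A_{i,:}\otimes\mathbf B_{i,:}$. $\mathbf T=[\mathbf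 G\mathbf S^1,\mathbf G\mathbf S^2,\mathbf G\mathbf v^1,\mathbf G\mathbf v^2,\mathbf G\mathbf w^1,\mathbf G\mathbf w^2]$, $\mathbf U=[\mathbf S^1,\mathbf S^2,-\mathbf d^1,-\mathbf d^2,-\mathbf v^1,-\mathbf v^2]\in\mathbb{R}^{n^2\times(2n+4)}$. *)

theory Defs
  imports "HOL-Analysis.Inner_Product" "Jordan_Normal_Form.Gauss_Jordan_Elimination"
begin

text \<open>Row-wise vectorization: vecr M = vec(M^T), entry (i,j) of M sits at position i*ncols + j.\<close>
definition vecr :: "'a mat \<Rightarrow> 'a vec" where
  "vecr M = vec (dim_row M * dim_col M) (\<lambda>p. M $$ (p div dim_col M, p mod dim_col M))"

definition kron :: "'a::times mat \<Rightarrow> 'a mat \<Rightarrow> 'a mat" where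
  "kron A B = mat (dim_row A * dim_row B) (dim_col A * dim_col B)
     (\<lambda>(p,q). A $$ (p div dim_row B, q div dim_col B) * B $$ (p mod dim_row B, q mod dim_col B))"

definition face_split :: "'a::times mat \<Rightarrow> 'a mat \<Rightarrow> 'a mat" where
  "face_split A B = mat (dim_row A) (dim_col A * dim_col B)
     (\<lambda>(i,p). A $$ (i, p div dim_col B) * B $$ (i, p mod dim_col B))"

definition hcat :: "'a mat \<Rightarrow> 'a mat \<Rightarrow> 'a mat" where
  "hcat A B = mat (dim_row A) (dim_col A + dim_col B)
     (\<lambda>(i,j). if j < dim_col A then A $$ (i,j) else B $$ (i, j - dim_col A))"

definition col_mat :: "'a vec \<Rightarrow> 'a mat" where
  "col_mat v = mat (dim_vec v) 1 (\<lambda>(i,j). v $ i)"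

definition minv :: "real mat \<Rightarrow> real mat" where
  "minv M = the (mat_inverse M)"

text \<open>Data: z_i = (x i, a i, y i) for i < n; a i is the binary treatment (True = 1).
  Fold labels: fl i \<in> {1,2} is s(i); the fold I^r = {i<n. fl i = r}; r(i) = 3 - s(i).
  ps r : X -> (0,1) is the propensity estimate \<ps>^r_n; beta r b xx j is [\<beta>^r_b(xx)]_j.\<close>

definition fold_set :: "(nat \<Rightarrow> nat) \<Rightarrow> nat \<Rightarrow> nat \<Rightarrow> nat set" where
  "fold_set fl n r = {i. i < n \<and> fl i = r}"

definition nf :: "(nat \<Rightarrow> nat) \<Rightarrow> nat \<Rightarrow> nat \<Rightarrow> real" where
  "nf fl n r = real (card (fold_set fl n r))"

definition theta ::
  "('x \<Rightarrow> 'y \<Rightarrow> 'h::real_vector) \<Rightarrow> (nat \<Rightarrow> 'y) \<Rightarrow> nat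
   \<Rightarrow> (nat \<Rightarrow> bool \<Rightarrow> 'x \<Rightarrow> nat \<Rightarrow> real) \<Rightarrow> nat \<Rightarrow> bool \<Rightarrow> 'x \<Rightarrow> 'h" where
  "theta Lam y n beta r b xx = (\<Sum>j<n. beta r b xx j *\<^sub>R Lam xx (y j))"

definition psi_r ::
  "('x \<Rightarrow> 'y \<Rightarrow> 'h::real_vector) \<Rightarrow> (nat \<Rightarrow> 'x) \<Rightarrow> (nat \<Rightarrow> 'y) \<Rightarrow> nat \<Rightarrow> (nat \<Rightarrow> nat)
   \<Rightarrow> (nat \<Rightarrow> bool \<Rightarrow> 'x \<Rightarrow> nat \<Rightarrow> real) \<Rightarrow> nat \<Rightarrow> 'h" where
  "psi_r Lam x y n fl beta r =
     (1 / nf fl n (3 - r)) *\<^sub>R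
       (\<Sum>i\<in>fold_set fl n (3 - r). theta Lam y n beta r True (x i) - theta Lam y n beta r False (x i))"

definition phi_r ::
  "('x \<Rightarrow> 'y \<Rightarrow> 'h::real_vector) \<Rightarrow> (nat \<Rightarrow> 'x) \<Rightarrow> (nat \<Rightarrow> 'y) \<Rightarrow> nat \<Rightarrow> (nat \<Rightarrow> nat)
   \<Rightarrow> (nat \<Rightarrow> 'x \<Rightarrow> real) \<Rightarrow> (nat \<Rightarrow> bool \<Rightarrow> 'x \<Rightarrow> nat \<Rightarrow> real) \<Rightarrow> nat
   \<Rightarrow> 'x \<Rightarrow> bool \<Rightarrow> 'y \<Rightarrow> 'h" where
  "phi_r Lam x y n fl ps beta r xx aa yy =
     (of_bool aa / ps r xx - (1 - of_bool aa) / (1 - ps r xx)) *\<^sub>R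
        (Lam xx yy - theta Lam y n beta r aa xx)
     + theta Lam y n beta r True xx - theta Lam y n beta r False xx
     - psi_r Lam x y n fl beta r"

definition psibar ::
  "('x \<Rightarrow> 'y \<Rightarrow> 'h::real_vector) \<Rightarrow> (nat \<Rightarrow> 'x) \<Rightarrow> (nat \<Rightarrow> bool) \<Rightarrow> (nat \<Rightarrow> 'y) \<Rightarrow> nat
   \<Rightarrow> (nat \<Rightarrow> nat) \<Rightarrow> (nat \<Rightarrow> 'x \<Rightarrow> real) \<Rightarrow> (nat \<Rightarrow> bool \<Rightarrow> 'x \<Rightarrow> nat \<Rightarrow> real) \<Rightarrow> 'h" where
  "psibar Lam x a y n fl ps beta =
     (1/2) *\<^sub>R (\<Sum>r\<in>{1,2}. psi_r Lam x y n fl beta r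
        + (1 / nf fl n (3 - r)) *\<^sub>R
            (\<Sum>i\<in>fold_set fl n (3 - r). phi_r Lam x y n fl ps beta r (x i) (a i) (y i)))"

definition Sigma_n ::
  "('x \<Rightarrow> 'y \<Rightarrow> 'h::real_inner) \<Rightarrow> (nat \<Rightarrow> 'x) \<Rightarrow> (nat \<Rightarrow> bool) \<Rightarrow> (nat \<Rightarrow> 'y) \<Rightarrow> nat
   \<Rightarrow> (nat \<Rightarrow> nat) \<Rightarrow> (nat \<Rightarrow> 'x \<Rightarrow> real) \<Rightarrow> (nat \<Rightarrow> bool \<Rightarrow> 'x \<Rightarrow> nat \<Rightarrow> real) \<Rightarrow> 'h \<Rightarrow> 'h" where
  "Sigma_n Lam x a y n fl ps beta h =
     (1/2) *\<^sub>R (\<Sum>r\<in>{1,2}. (1 / nf fl n (3 - r)) *\<^sub>R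
        (\<Sum>i\<in>fold_set fl n (3 - r).
            inner (phi_r Lam x y n fl ps beta r (x i) (a i) (y i)) h
              *\<^sub>R phi_r Lam x y n fl ps beta r (x i) (a i) (y i)))"

definition Omega_n ::
  "real \<Rightarrow> ('x \<Rightarrow> 'y \<Rightarrow> 'h::real_inner) \<Rightarrow> (nat \<Rightarrow> 'x) \<Rightarrow> (nat \<Rightarrow> bool) \<Rightarrow> (nat \<Rightarrow> 'y) \<Rightarrow> nat
   \<Rightarrow> (nat \<Rightarrow> nat) \<Rightarrow> (nat \<Rightarrow> 'x \<Rightarrow> real) \<Rightarrow> (nat \<Rightarrow> bool \<Rightarrow> 'x \<Rightarrow> nat \<Rightarrow> real) \<Rightarrow> 'h \<Rightarrow> 'h" where
  "Omega_n eps Lam x a y n fl ps beta =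
     inv_into UNIV (\<lambda>h. (1 - eps) *\<^sub>R Sigma_n Lam x a y n fl ps beta h + eps *\<^sub>R h)"

definition Kmat :: "('x \<Rightarrow> 'x \<Rightarrow> real) \<Rightarrow> (nat \<Rightarrow> 'x) \<Rightarrow> nat \<Rightarrow> real mat" where
  "Kmat k x n = mat n n (\<lambda>(i,j). k (x i) (x j))"

definition Gmat :: "('x \<Rightarrow> 'x \<Rightarrow> real) \<Rightarrow> ('y \<Rightarrow> 'y \<Rightarrow> real) \<Rightarrow> (nat \<Rightarrow> 'x) \<Rightarrow> (nat \<Rightarrow> 'y)
   \<Rightarrow> nat \<Rightarrow> real mat" where
  "Gmat k l x y n = kron (Kmat k x n) (Kmat l y n)"

definition wgt :: "(nat \<Rightarrow> 'x) \<Rightarrow> (nat \<Rightarrow> nat) \<Rightarrow> (nat \<Rightarrow> 'x \<Rightarrow> real) \<Rightarrow> nat \<Rightarrow> real" where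
  "wgt x fl ps i = ps (3 - fl i) (x i)"

definition Cmat :: "(nat \<Rightarrow> 'x) \<Rightarrow> (nat \<Rightarrow> bool) \<Rightarrow> nat \<Rightarrow> (nat \<Rightarrow> nat) \<Rightarrow> (nat \<Rightarrow> 'x \<Rightarrow> real)
   \<Rightarrow> (nat \<Rightarrow> bool \<Rightarrow> 'x \<Rightarrow> nat \<Rightarrow> real) \<Rightarrow> real mat" where
  "Cmat x a n fl ps beta = mat n n (\<lambda>(i,j).
     (let w = wgt x fl ps i; ai = (of_bool (a i) :: real); c = 1 / (2 * nf fl n (fl i)) in
      if i = j then c * (ai / w - (1 - ai) / (1 - w))
      else c * ((1 - ai / w) * beta (3 - fl i) True (x i) j
                + ((1 - ai) / (1 - w) - 1) * beta (3 - fl i) False (x i) j)))"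

definition Emat :: "(nat \<Rightarrow> 'x) \<Rightarrow> nat \<Rightarrow> (nat \<Rightarrow> nat)
   \<Rightarrow> (nat \<Rightarrow> bool \<Rightarrow> 'x \<Rightarrow> nat \<Rightarrow> real) \<Rightarrow> real mat" where
  "Emat x n fl beta = mat n n (\<lambda>(i,j).
     if i = j then 0
     else 1 / (2 * nf fl n (fl i)) * (beta (3 - fl i) True (x i) j - beta (3 - fl i) False (x i) j))"

definition Dmat :: "(nat \<Rightarrow> 'x) \<Rightarrow> (nat \<Rightarrow> bool) \<Rightarrow> nat \<Rightarrow> (nat \<Rightarrow> nat) \<Rightarrow> (nat \<Rightarrow> 'x \<Rightarrow> real)
   \<Rightarrow> (nat \<Rightarrow> bool \<Rightarrow> 'x \<Rightarrow> nat \<Rightarrow> real) \<Rightarrow> nat \<Rightarrow> real mat" where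
  "Dmat x a n fl ps beta s = mat n n (\<lambda>(i,j).
     if fl i = s then sqrt (2 * nf fl n s) * Cmat x a n fl ps beta $$ (i,j) else 0)"

definition Vmat :: "(nat \<Rightarrow> 'x) \<Rightarrow> nat \<Rightarrow> (nat \<Rightarrow> nat)
   \<Rightarrow> (nat \<Rightarrow> bool \<Rightarrow> 'x \<Rightarrow> nat \<Rightarrow> real) \<Rightarrow> nat \<Rightarrow> real mat" where
  "Vmat x n fl beta s = mat n n (\<lambda>(i,j).
     if fl i = s then sqrt (2 / nf fl n s) * Emat x n fl beta $$ (i,j) else 0)"

definition Wmat :: "(nat \<Rightarrow> 'x) \<Rightarrow> (nat \<Rightarrow> bool) \<Rightarrow> nat \<Rightarrow> (nat \<Rightarrow> nat) \<Rightarrow> (nat \<Rightarrow> 'x \<Rightarrow> real)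
   \<Rightarrow> (nat \<Rightarrow> bool \<Rightarrow> 'x \<Rightarrow> nat \<Rightarrow> real) \<Rightarrow> nat \<Rightarrow> real mat" where
  "Wmat x a n fl ps beta s = Dmat x a n fl ps beta s - nf fl n s \<cdot>\<^sub>m Vmat x n fl beta s"

definition Smat :: "(nat \<Rightarrow> 'x) \<Rightarrow> (nat \<Rightarrow> bool) \<Rightarrow> nat \<Rightarrow> (nat \<Rightarrow> nat) \<Rightarrow> (nat \<Rightarrow> 'x \<Rightarrow> real)
   \<Rightarrow> (nat \<Rightarrow> bool \<Rightarrow> 'x \<Rightarrow> nat \<Rightarrow> real) \<Rightarrow> nat \<Rightarrow> real mat" where
  "Smat x a n fl ps beta s = transpose_mat (face_split (1\<^sub>m n) (Dmat x a n fl ps beta s))"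

definition Tmat :: "('x \<Rightarrow> 'x \<Rightarrow> real) \<Rightarrow> ('y \<Rightarrow> 'y \<Rightarrow> real) \<Rightarrow> (nat \<Rightarrow> 'x) \<Rightarrow> (nat \<Rightarrow> bool)
   \<Rightarrow> (nat \<Rightarrow> 'y) \<Rightarrow> nat \<Rightarrow> (nat \<Rightarrow> nat) \<Rightarrow> (nat \<Rightarrow> 'x \<Rightarrow> real)
   \<Rightarrow> (nat \<Rightarrow> bool \<Rightarrow> 'x \<Rightarrow> nat \<Rightarrow> real) \<Rightarrow> real mat" where
  "Tmat k l x a y n fl ps beta =
    (let G = Gmat k l x y n in
     hcat (G * Smat x a n fl ps beta 1)
     (hcat (G * Smat x a n fl ps beta 2)
     (hcat (G * col_mat (vecr (Vmat x n fl beta 1)))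
     (hcat (G * col_mat (vecr (Vmat x n fl beta 2)))
     (hcat (G * col_mat (vecr (Wmat x a n fl ps beta 1)))
           (G * col_mat (vecr (Wmat x a n fl ps beta 2))))))))"

definition Umat :: "(nat \<Rightarrow> 'x) \<Rightarrow> (nat \<Rightarrow> bool) \<Rightarrow> nat \<Rightarrow> (nat \<Rightarrow> nat) \<Rightarrow> (nat \<Rightarrow> 'x \<Rightarrow> real)
   \<Rightarrow> (nat \<Rightarrow> bool \<Rightarrow> 'x \<Rightarrow> nat \<Rightarrow> real) \<Rightarrow> real mat" where
  "Umat x a n fl ps beta =
     hcat (Smat x a n fl ps beta 1)
     (hcat (Smat x a n fl ps beta 2)
     (hcat (- col_mat (vecr (Dmat x a n fl ps beta 1)))
     (hcat (- col_mat (vecr (Dmat x a n fl ps beta 2)))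
     (hcat (- col_mat (vecr (Vmat x n fl beta 1)))
           (- col_mat (vecr (Vmat x n fl beta 2)))))))"

definition Omega_tilde :: "real \<Rightarrow> ('x \<Rightarrow> 'x \<Rightarrow> real) \<Rightarrow> ('y \<Rightarrow> 'y \<Rightarrow> real) \<Rightarrow> (nat \<Rightarrow> 'x)
   \<Rightarrow> (nat \<Rightarrow> bool) \<Rightarrow> (nat \<Rightarrow> 'y) \<Rightarrow> nat \<Rightarrow> (nat \<Rightarrow> nat) \<Rightarrow> (nat \<Rightarrow> 'x \<Rightarrow> real)
   \<Rightarrow> (nat \<Rightarrow> bool \<Rightarrow> 'x \<Rightarrow> nat \<Rightarrow> real) \<Rightarrow> real mat" where
  "Omega_tilde eps k l x a y n fl ps beta =
    (let T = Tmat k l x a y n fl ps beta; U = Umat x a n fl ps beta in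
     (1 / eps) \<cdot>\<^sub>m 1\<^sub>m (n * n)
     - ((1 - eps) / eps) \<cdot>\<^sub>m
         (T * minv (eps \<cdot>\<^sub>m 1\<^sub>m (2 * n + 4) + (1 - eps) \<cdot>\<^sub>m (transpose_mat U * T))
            * transpose_mat U))"

end

theory Submission
  imports Defs "Jordan_Normal_Form.Determinant"
begin

lemma sum_mult_reindex: "(\<Sum>p<m*(n::nat). F p) = (\<Sum>i<m. \<Sum>j<n. F (i*n+j))"
proof (induction m)
  case 0 then show ?case by simp
next
  case (Suc m)
  have "(\<Sum>p<Suc m*n. F p) = (\<Sum>p<m*n. F p) + (\<Sum>p=m*n..<m*n+n. F p)"
    by (metis add.commute lessThan_atLeast0 mult_Suc sum.atLeastLessThan_concat le_add1 zero_le)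
  also have "(\<Sum>p=m*n..<m*n+n. F p) = (\<Sum>j<n. F (m*n+j))"
    using sum.shift_bounds_nat_ivl[of F 0 "m*n" n] by (simp add: lessThan_atLeast0 add.commute)
  finally show ?case using Suc by simp
qed

lemma sum_divmod: "(\<Sum>p<n*(n::nat). F (p div n) (p mod n)) = (\<Sum>i<n. \<Sum>j<n. F i j)"
  unfolding sum_mult_reindex by (intro sum.cong refl) auto

lemma hcat_carrier: "A \<in> carrier_mat m a \<Longrightarrow> B \<in> carrier_mat m b \<Longrightarrow> hcat A B \<in> carrier_mat m (a+b)"
  unfolding hcat_def by auto

lemma hcat_index: "i < dim_row A \<Longrightarrow> j < dim_col A + dim_col B \<Longrightarrow>
   hcat A B $$ (i,j) = (if j < dim_col A then A $$ (i,j) else B $$ (i, j - dim_col A))"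
  unfolding hcat_def by auto


lemma sum_lessThan_add_split: "(\<Sum>k<a+b. f k) = (\<Sum>k<a. f k) + (\<Sum>k<b. f (a+k::nat))"
  by (induction b) (auto simp: ac_simps)

lemma col_hcat: "A \<in> carrier_mat m a \<Longrightarrow> B \<in> carrier_mat m b \<Longrightarrow> j < a + b \<Longrightarrow>
   col (hcat A B) j = (if j < a then col A j else col B (j - a))"
  by (auto simp: hcat_def col_def)

lemma mult_hcat: assumes "G \<in> carrier_mat k m" "A \<in> carrier_mat m a" "B \<in> carrier_mat m b"
  shows "G * hcat A B = hcat (G * A) (G * B)"
proof (rule eq_matI)
  fix i j assume "i < dim_row (hcat (G * A) (G * B))" "j < dim_col (hcat (G * A) (G * B))"
  then have i: "i < k" and j: "j < a + b" using assms by (auto simp: hcat_def)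
  have c: "hcat A B \<in> carrier_mat m (a+b)" using hcat_carrier[OF assms(2,3)] .
  show "(G * hcat A B) $$ (i, j) = hcat (G * A) (G * B) $$ (i, j)"
    using assms i j c by (simp add: col_hcat hcat_index)
qed (use assms in \<open>auto simp: hcat_def\<close>)

lemma hcat_mult_transpose: assumes "A \<in> carrier_mat m a" "B \<in> carrier_mat m b"
   "C \<in> carrier_mat m' a" "D \<in> carrier_mat m' b"
  shows "hcat A B * transpose_mat (hcat C D) = A * transpose_mat C + B * transpose_mat D"
proof (rule eq_matI)
  fix i j assume ij: "i < dim_row (A * transpose_mat C + B * transpose_mat D)"
     "j < dim_col (A * transpose_mat C + B * transpose_mat D)"
  then have i: "i < m" and j: "j < m'" using assms by auto
  have "(hcat A B * transpose_mat (hcat C D)) $$ (i,j) = (\<Sum>k<a+b. hcat A B $$ (i,k) * hcat C D $$ (j,k))"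
    using assms i j by (simp add: hcat_def scalar_prod_def lessThan_atLeast0 row_def col_def)
  also have "\<dots> = (\<Sum>k<a. hcat A B $$ (i,k) * hcat C D $$ (j,k)) + (\<Sum>k<b. hcat A B $$ (i,a+k) * hcat C D $$ (j,a+k))"
    by (rule sum_lessThan_add_split)
  also have "\<dots> = (A * transpose_mat C) $$ (i,j) + (B * transpose_mat D) $$ (i,j)"
    using assms i j by (simp add: hcat_def scalar_prod_def lessThan_atLeast0 row_def col_def)
  finally show "(hcat A B * transpose_mat (hcat C D)) $$ (i,j) = (A * transpose_mat C + B * transpose_mat D) $$ (i,j)"
    using assms i j by simp
qed (use assms in \<open>auto simp: hcat_def\<close>)



lemma dim_hcat[simp]: "dim_row (hcat A B) = dim_row A" "dim_col (hcat A B) = dim_col A + dim_col B"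
  unfolding hcat_def by auto

lemma dim_col_mat[simp]: "dim_row (col_mat v) = dim_vec v" "dim_col (col_mat v) = 1"
  unfolding col_mat_def by auto

lemma col_mat_index[simp]: "i < dim_vec v \<Longrightarrow> j < 1 \<Longrightarrow> col_mat v $$ (i,j) = v $ i"
  unfolding col_mat_def by auto

lemma dim_vecr[simp]: "dim_vec (vecr M) = dim_row M * dim_col M"
  unfolding vecr_def by auto

lemma vecr_index[simp]: "p < dim_row M * dim_col M \<Longrightarrow> vecr M $ p = M $$ (p div dim_col M, p mod dim_col M)"
  unfolding vecr_def by auto

lemma mult_hcat': "dim_row A = dim_col G \<Longrightarrow> dim_row B = dim_col G \<Longrightarrow> G * hcat A B = hcat (G * A) (G * B)"
  by (rule mult_hcat[of G "dim_row G" "dim_col G" A "dim_col A" B "dim_col B"]) auto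

lemma hcat_mult_transpose': "dim_row B = dim_row A \<Longrightarrow> dim_row D = dim_row C \<Longrightarrow> dim_col C = dim_col A \<Longrightarrow>
   dim_col D = dim_col B \<Longrightarrow>
   hcat A B * transpose_mat (hcat C D) = A * transpose_mat C + B * transpose_mat D"
  by (rule hcat_mult_transpose[of A "dim_row A" "dim_col A" B "dim_col B" C "dim_row C" D]) auto


lemma mult_transpose_index: "t < dim_row A \<Longrightarrow> q < dim_row B \<Longrightarrow> dim_col A = dim_col B \<Longrightarrow>
  (A * transpose_mat B) $$ (t,q) = (\<Sum>i<dim_col A. A $$ (t,i) * B $$ (q,i))"
  by (simp add: scalar_prod_def lessThan_atLeast0)

lemma sum_prod_expand: "(\<Sum>i\<in>F. (A i - v) * (B i - w)) =
   (\<Sum>i\<in>F. A i * B i) - w * (\<Sum>i\<in>F. A i) - v * (\<Sum>i\<in>F. B i) + real (card F) * v * (w::real)"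
  by (simp add: algebra_simps sum.distrib sum_subtractf sum_distrib_left)


lemma woodbury_left:
  fixes T U Xi :: "real mat"
  assumes T: "T \<in> carrier_mat N K" and U: "U \<in> carrier_mat N K" and Xi: "Xi \<in> carrier_mat K K"
    and inv: "Xi * (e \<cdot>\<^sub>m 1\<^sub>m K + c \<cdot>\<^sub>m (transpose_mat U * T)) = 1\<^sub>m K" and e: "e \<noteq> 0"
  shows "((1/e) \<cdot>\<^sub>m 1\<^sub>m N - (c/e) \<cdot>\<^sub>m (T * Xi * transpose_mat U)) * (e \<cdot>\<^sub>m 1\<^sub>m N + c \<cdot>\<^sub>m (T * transpose_mat U)) = 1\<^sub>m N"
proof -
  have Ut: "transpose_mat U \<in> carrier_mat K N" using U by simp
  define X where "X = e \<cdot>\<^sub>m 1\<^sub>m K + c \<cdot>\<^sub>m (transpose_mat U * T)"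
  define Y where "Y = e \<cdot>\<^sub>m 1\<^sub>m N + c \<cdot>\<^sub>m (T * transpose_mat U)"
  have X: "X \<in> carrier_mat K K" using T Ut unfolding X_def by auto
  have Y: "Y \<in> carrier_mat N N" using T Ut unfolding Y_def by auto
  have TU: "T * transpose_mat U \<in> carrier_mat N N" using T Ut by auto
  have UT: "transpose_mat U * T \<in> carrier_mat K K" using T Ut by auto
  have UY: "transpose_mat U * Y = X * transpose_mat U"
  proof -
    have "transpose_mat U * Y = e \<cdot>\<^sub>m transpose_mat U + c \<cdot>\<^sub>m (transpose_mat U * T * transpose_mat U)"
    proof -
      have "transpose_mat U * Y = transpose_mat U * (e \<cdot>\<^sub>m 1\<^sub>m N) + transpose_mat U * (c \<cdot>\<^sub>m (T * transpose_mat U))"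
        unfolding Y_def by (rule mult_add_distrib_mat[OF Ut]) (use TU in auto)
      also have "\<dots> = e \<cdot>\<^sub>m transpose_mat U + c \<cdot>\<^sub>m (transpose_mat U * (T * transpose_mat U))"
        using Ut TU by (simp add: mult_smult_distrib[OF Ut] mult_smult_distrib[OF Ut one_carrier_mat])
      also have "transpose_mat U * (T * transpose_mat U) = transpose_mat U * T * transpose_mat U"
        using Ut T by simp
      finally show ?thesis .
    qed
    also have "\<dots> = X * transpose_mat U"
      unfolding X_def using Ut T UT
      by (simp add: add_mult_distrib_mat[of _ K K] mult_smult_assoc_mat[of _ K K])
    finally show ?thesis .
  qed
  have "T * Xi * transpose_mat U * Y = T * Xi * (transpose_mat U * Y)"
    using assoc_mult_mat[OF mult_carrier_mat[OF T Xi] Ut Y] .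
  also have "\<dots> = T * (Xi * X) * transpose_mat U" unfolding UY
    using assoc_mult_mat[OF T Xi mult_carrier_mat[OF X Ut]] assoc_mult_mat[OF Xi X Ut, symmetric]
      assoc_mult_mat[OF T mult_carrier_mat[OF Xi X] Ut] by simp
  also have "\<dots> = T * transpose_mat U" using inv T Ut unfolding X_def by simp
  finally have TXUY: "T * Xi * transpose_mat U * Y = T * transpose_mat U" .
  have TXU: "T * Xi * transpose_mat U \<in> carrier_mat N N" using T Xi Ut by auto
  have "((1/e) \<cdot>\<^sub>m 1\<^sub>m N - (c/e) \<cdot>\<^sub>m (T * Xi * transpose_mat U)) * Y
     = (1/e) \<cdot>\<^sub>m Y - (c/e) \<cdot>\<^sub>m (T * Xi * transpose_mat U * Y)"
    using TXU Y by (simp add: minus_mult_distrib_mat[of _ N N] mult_smult_assoc_mat[of _ N N])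
  also have "\<dots> = 1\<^sub>m N" unfolding TXUY unfolding Y_def
    using TU T U e by (intro eq_matI) (auto simp: field_simps)
  finally show ?thesis unfolding Y_def .
qed

lemma mult_mat_vec_index: "i < dim_row A \<Longrightarrow> dim_vec w = dim_col A \<Longrightarrow>
   (A *\<^sub>v w) $ i = (\<Sum>j<dim_col A. A $$ (i,j) * w $ j)"
  by (simp add: scalar_prod_def lessThan_atLeast0 mult_ac)


lemma mult_index: "i < dim_row A \<Longrightarrow> j < dim_col B \<Longrightarrow> dim_col A = dim_row B \<Longrightarrow>
   (A * B) $$ (i,j) = (\<Sum>k<dim_col A. A $$ (i,k) * B $$ (k,j))"
  by (simp add: scalar_prod_def lessThan_atLeast0)

lemma sum_swap_sym:
  assumes sym: "\<And>p t. p < N \<Longrightarrow> t < N \<Longrightarrow> G p t = G t p"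
  shows "(\<Sum>p<N. b p * (\<Sum>t<N. G p t * (\<Sum>i\<in>F. r i t * r i q)))
    = (\<Sum>i\<in>F. (\<Sum>t<N. \<Sum>p<N. r i t * G t p * b p) * (r i q :: real))"
proof -
  have "(\<Sum>p<N. b p * (\<Sum>t<N. G p t * (\<Sum>i\<in>F. r i t * r i q)))
     = (\<Sum>p<N. \<Sum>t<N. \<Sum>i\<in>F. r i t * G t p * b p * r i q)"
  proof (intro sum.cong refl)
    fix p assume p: "p \<in> {..<N}"
    have "b p * (\<Sum>t<N. G p t * (\<Sum>i\<in>F. r i t * r i q)) = (\<Sum>t<N. \<Sum>i\<in>F. b p * G p t * r i t * r i q)"
      by (simp add: sum_distrib_left mult_ac)
    also have "\<dots> = (\<Sum>t<N. \<Sum>i\<in>F. r i t * G t p * b p * r i q)"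
      using p sym by (intro sum.cong refl) (simp add: mult_ac)
    finally show "b p * (\<Sum>t<N. G p t * (\<Sum>i\<in>F. r i t * r i q)) = (\<Sum>t<N. \<Sum>i\<in>F. r i t * G t p * b p * r i q)" .
  qed
  also have "\<dots> = (\<Sum>t<N. \<Sum>p<N. \<Sum>i\<in>F. r i t * G t p * b p * r i q)"
    by (rule sum.swap)
  also have "\<dots> = (\<Sum>t<N. \<Sum>i\<in>F. \<Sum>p<N. r i t * G t p * b p * r i q)"
    by (intro sum.cong refl) (rule sum.swap)
  also have "\<dots> = (\<Sum>i\<in>F. \<Sum>t<N. \<Sum>p<N. r i t * G t p * b p * r i q)"
    by (rule sum.swap)
  also have "\<dots> = (\<Sum>i\<in>F. (\<Sum>t<N. \<Sum>p<N. r i t * G t p * b p) * r i q)"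
    by (simp add: sum_distrib_right)
  finally show ?thesis .
qed

locale setting =
  fixes k :: "'x \<Rightarrow> 'x \<Rightarrow> real" and l :: "'y \<Rightarrow> 'y \<Rightarrow> real"
    and Kf :: "'x \<Rightarrow> 'hx::real_inner" and Lf :: "'y \<Rightarrow> 'hy::real_inner"
    and tensor :: "'hx \<Rightarrow> 'hy \<Rightarrow> 'h::real_inner"
    and Lam :: "'x \<Rightarrow> 'y \<Rightarrow> 'h"
    and n :: nat and x :: "nat \<Rightarrow> 'x" and a :: "nat \<Rightarrow> bool" and y :: "nat \<Rightarrow> 'y"
    and fl :: "nat \<Rightarrow> nat"
    and ps :: "nat \<Rightarrow> 'x \<Rightarrow> real"
    and beta :: "nat \<Rightarrow> bool \<Rightarrow> 'x \<Rightarrow> nat \<Rightarrow> real"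
  assumes k_feat: "\<And>u v. k u v = inner (Kf u) (Kf v)"
    and l_feat: "\<And>u v. l u v = inner (Lf u) (Lf v)"
    and tensor_inner: "\<And>f g f' g'. inner (tensor f g) (tensor f' g') = inner f f' * inner g g'"
    and Lam_def: "\<And>u v. Lam u v = tensor (Kf u) (Lf v)"
    and folds: "\<forall>i<n. fl i \<in> {1, 2}"
    and fold1_ne: "fold_set fl n 1 \<noteq> {}" and fold2_ne: "fold_set fl n 2 \<noteq> {}"
    and pi_range: "\<And>r u. r \<in> {1, 2} \<Longrightarrow> 0 < ps r u \<and> ps r u < 1"
    and beta_zero: "\<And>r b u j. r \<in> {1, 2} \<Longrightarrow> j \<notin> fold_set fl n r \<or> a j \<noteq> b \<Longrightarrow> beta r b u j = 0"
begin

abbreviation "C \<equiv> Cmat x a n fl ps beta"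
abbreviation "th \<equiv> theta Lam y n beta"
abbreviation "psr \<equiv> psi_r Lam x y n fl beta"
abbreviation "phr \<equiv> phi_r Lam x y n fl ps beta"
abbreviation "ns \<equiv> nf fl n"

lemma fin_fold: "finite (fold_set fl n s)"
  unfolding fold_set_def by auto

lemma ns_pos: "s \<in> {1,2} \<Longrightarrow> ns s > 0"
  using fold1_ne fold2_ne fin_fold unfolding nf_def by (auto simp: card_gt_0_iff)

lemma fold_lt: "i \<in> fold_set fl n s \<Longrightarrow> i < n"
  unfolding fold_set_def by auto

lemma fold_fl: "i \<in> fold_set fl n s \<Longrightarrow> fl i = s"
  unfolding fold_set_def by auto

lemma beta_self: assumes "s \<in> {1,2}" "i \<in> fold_set fl n s"
  shows "beta (3 - s) b u i = 0"
proof -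
  have "i \<notin> fold_set fl n (3 - s)" using assms unfolding fold_set_def by auto
  then show ?thesis using assms(1) by (intro beta_zero) auto
qed

lemma coefC: assumes s: "s \<in> {1,2}" and i: "i \<in> fold_set fl n s" and j: "j < n"
  shows "2 * ns s * C $$ (i,j) =
     (of_bool (a i) / ps (3-s) (x i) - (1 - of_bool (a i)) / (1 - ps (3-s) (x i))) *
        ((if j = i then 1 else 0) - beta (3-s) (a i) (x i) j)
     + beta (3-s) True (x i) j - beta (3-s) False (x i) j"
proof -
  have il: "i < n" and fli: "fl i = s" using i by (auto simp: fold_set_def)
  have np: "ns s > 0" using ns_pos s .
  have w: "0 < ps (3-s) (x i)" "ps (3-s) (x i) < 1" using pi_range[of "3-s" "x i"] s by auto
  have wg: "wgt x fl ps i = ps (3-s) (x i)" by (simp add: wgt_def fli)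
  show ?thesis
  proof (cases "j = i")
    case True
    then show ?thesis using il np beta_self[OF s i] by (simp add: Cmat_def wg fli)
  next
    case False
    then show ?thesis using il j np w by (cases "a i") (auto simp add: Cmat_def wg fli field_simps)
  qed
qed


lemma phi_C: assumes s: "s \<in> {1,2}" and i: "i \<in> fold_set fl n s"
  shows "phr (3-s) (x i) (a i) (y i) =
     (\<Sum>j<n. (2 * ns s * C $$ (i,j)) *\<^sub>R Lam (x i) (y j)) - psr (3-s)"
proof -
  define kap where "kap = of_bool (a i) / ps (3-s) (x i) - (1 - of_bool (a i)) / (1 - ps (3-s) (x i))"
  have il: "i < n" using i by (auto simp: fold_set_def)
  have "(\<Sum>j<n. (2 * ns s * C $$ (i,j)) *\<^sub>R Lam (x i) (y j))
     = (\<Sum>j<n. (kap * (if j = i then 1 else 0)) *\<^sub>R Lam (x i) (y j))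
       - (\<Sum>j<n. (kap * beta (3-s) (a i) (x i) j) *\<^sub>R Lam (x i) (y j))
       + (\<Sum>j<n. beta (3-s) True (x i) j *\<^sub>R Lam (x i) (y j))
       - (\<Sum>j<n. beta (3-s) False (x i) j *\<^sub>R Lam (x i) (y j))"
  proof -
    have "(\<Sum>j<n. (2 * ns s * C $$ (i,j)) *\<^sub>R Lam (x i) (y j)) =
      (\<Sum>j<n. (kap * ((if j = i then 1 else 0) - beta (3-s) (a i) (x i) j)
     + beta (3-s) True (x i) j - beta (3-s) False (x i) j) *\<^sub>R Lam (x i) (y j))"
      by (intro sum.cong refl) (simp only: coefC[OF s i] kap_def lessThan_iff)
    then show ?thesis
      by (simp only: right_diff_distrib scaleR_left_diff_distrib scaleR_left_distrib sum.distrib sum_subtractf)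
  qed
  also have "\<dots> = kap *\<^sub>R (Lam (x i) (y i) - th (3-s) (a i) (x i)) + th (3-s) True (x i) - th (3-s) False (x i)"
  proof -
    have "(\<Sum>j<n. (kap * (if j = i then 1 else 0)) *\<^sub>R Lam (x i) (y j))
       = (\<Sum>j<n. if j = i then kap *\<^sub>R Lam (x i) (y j) else 0)"
      by (intro sum.cong refl) auto
    also have "\<dots> = kap *\<^sub>R Lam (x i) (y i)" using il by simp
    finally show ?thesis by (simp add: theta_def scaleR_diff_right scaleR_sum_right)
  qed
  finally show ?thesis unfolding phi_r_def kap_def by simp
qed


lemma psi_E: assumes s: "s \<in> {1,2}"
  shows "psr (3-s) = (\<Sum>m<n. \<Sum>j<n.
      (if fl m = s then 2 * Emat x n fl beta $$ (m,j) else 0) *\<^sub>R Lam (x m) (y j))"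
proof -
  have s3: "3 - (3 - s) = s" using s by auto
  have "psr (3-s) = (\<Sum>m\<in>fold_set fl n s. \<Sum>j<n.
        (1 / ns s) *\<^sub>R ((beta (3-s) True (x m) j - beta (3-s) False (x m) j) *\<^sub>R Lam (x m) (y j)))"
    unfolding psi_r_def theta_def s3
    by (simp add: scaleR_sum_right sum_subtractf[symmetric] scaleR_diff_left)
  also have "\<dots> = (\<Sum>m\<in>{..<n} \<inter> {m. fl m = s}. \<Sum>j<n.
      (2 * Emat x n fl beta $$ (m,j)) *\<^sub>R Lam (x m) (y j))"
  proof (rule sum.cong)
    show "fold_set fl n s = {..<n} \<inter> {m. fl m = s}" by (auto simp: fold_set_def)
  next
    fix m assume m: "m \<in> {..<n} \<inter> {m. fl m = s}"
    then have mF: "m \<in> fold_set fl n s" and ml: "m < n" and flm: "fl m = s" by (auto simp: fold_set_def)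
    show "(\<Sum>j<n. (1 / ns s) *\<^sub>R ((beta (3-s) True (x m) j - beta (3-s) False (x m) j) *\<^sub>R Lam (x m) (y j)))
       = (\<Sum>j<n. (2 * Emat x n fl beta $$ (m,j)) *\<^sub>R Lam (x m) (y j))"
    proof (rule sum.cong[OF refl])
      fix j assume j: "j \<in> {..<n}"
      have np: "ns s > 0" using ns_pos s .
      show "(1 / ns s) *\<^sub>R ((beta (3-s) True (x m) j - beta (3-s) False (x m) j) *\<^sub>R Lam (x m) (y j))
         = (2 * Emat x n fl beta $$ (m,j)) *\<^sub>R Lam (x m) (y j)"
      proof -
        have "(1 / ns s) * (beta (3-s) True (x m) j - beta (3-s) False (x m) j) = 2 * Emat x n fl beta $$ (m,j)"
          using j ml np beta_self[OF s mF] by (cases "j = m") (auto simp: Emat_def flm field_simps)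
        then show ?thesis by (simp only: scaleR_scaleR)
      qed
    qed
  qed
  also have "\<dots> = (\<Sum>m<n. if m \<in> {m. fl m = s} then (\<Sum>j<n.
      (2 * Emat x n fl beta $$ (m,j)) *\<^sub>R Lam (x m) (y j)) else 0)"
    by (rule sum.inter_restrict) simp
  also have "\<dots> = (\<Sum>m<n. \<Sum>j<n.
      (if fl m = s then 2 * Emat x n fl beta $$ (m,j) else 0) *\<^sub>R Lam (x m) (y j))"
    by (intro sum.cong refl) auto
  finally show ?thesis .
qed

lemma psibar_C: "psibar Lam x a y n fl ps beta = (\<Sum>i<n. \<Sum>j<n. C $$ (i,j) *\<^sub>R Lam (x i) (y j))"
proof -
  have one: "psr (3-s) + (1 / ns s) *\<^sub>R (\<Sum>i\<in>fold_set fl n s. phr (3-s) (x i) (a i) (y i))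
     = (\<Sum>i\<in>fold_set fl n s. \<Sum>j<n. (2 * C $$ (i,j)) *\<^sub>R Lam (x i) (y j))" if s: "s \<in> {1,2}" for s
  proof -
    have np: "ns s > 0" using ns_pos s .
    have "(\<Sum>i\<in>fold_set fl n s. phr (3-s) (x i) (a i) (y i))
       = (\<Sum>i\<in>fold_set fl n s. (\<Sum>j<n. (2 * ns s * C $$ (i,j)) *\<^sub>R Lam (x i) (y j)))
         - ns s *\<^sub>R psr (3-s)"
      using phi_C[OF s] by (simp add: sum_subtractf nf_def sum_constant_scaleR)
    then have "(1 / ns s) *\<^sub>R (\<Sum>i\<in>fold_set fl n s. phr (3-s) (x i) (a i) (y i))
       = (\<Sum>i\<in>fold_set fl n s. \<Sum>j<n. (2 * C $$ (i,j)) *\<^sub>R Lam (x i) (y j)) - psr (3-s)"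
      using np by (simp add: scaleR_diff_right scaleR_sum_right)
    then show ?thesis by simp
  qed
  have "psibar Lam x a y n fl ps beta = (1/2) *\<^sub>R (
     (\<Sum>i\<in>fold_set fl n 1. \<Sum>j<n. (2 * C $$ (i,j)) *\<^sub>R Lam (x i) (y j)) +
     (\<Sum>i\<in>fold_set fl n 2. \<Sum>j<n. (2 * C $$ (i,j)) *\<^sub>R Lam (x i) (y j)))"
    unfolding psibar_def using one[of 1] one[of 2] by (simp add: add.commute)
  also have "\<dots> = (\<Sum>i\<in>fold_set fl n 1 \<union> fold_set fl n 2. \<Sum>j<n. C $$ (i,j) *\<^sub>R Lam (x i) (y j))"
  proof -
    have "(1/2) *\<^sub>R (
     (\<Sum>i\<in>fold_set fl n 1. \<Sum>j<n. (2 * C $$ (i,j)) *\<^sub>R Lam (x i) (y j)) +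
     (\<Sum>i\<in>fold_set fl n 2. \<Sum>j<n. (2 * C $$ (i,j)) *\<^sub>R Lam (x i) (y j)))
     = (\<Sum>i\<in>fold_set fl n 1. \<Sum>j<n. C $$ (i,j) *\<^sub>R Lam (x i) (y j)) +
       (\<Sum>i\<in>fold_set fl n 2. \<Sum>j<n. C $$ (i,j) *\<^sub>R Lam (x i) (y j))"
      by (simp only: scaleR_add_right scaleR_sum_right scaleR_scaleR) simp
    also have "\<dots> = (\<Sum>i\<in>fold_set fl n 1 \<union> fold_set fl n 2. \<Sum>j<n. C $$ (i,j) *\<^sub>R Lam (x i) (y j))"
      by (rule sum.union_disjoint[symmetric]) (auto simp: fin_fold fold_set_def)
    finally show ?thesis .
  qed
  also have "fold_set fl n 1 \<union> fold_set fl n 2 = {..<n}" using folds by (auto simp: fold_set_def)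
  finally show ?thesis .
qed


definition Lp :: "nat \<Rightarrow> 'h" where "Lp p = Lam (x (p div n)) (y (p mod n))"
definition vH :: "(nat \<Rightarrow> real) \<Rightarrow> 'h" where "vH u = (\<Sum>p<n*n. u p *\<^sub>R Lp p)"
abbreviation "D s \<equiv> Dmat x a n fl ps beta s"
abbreviation "V s \<equiv> Vmat x n fl beta s"
definition rho :: "nat \<Rightarrow> nat \<Rightarrow> nat \<Rightarrow> real" where
  "rho s i p = (if p div n = i then D s $$ (i, p mod n) else 0) - V s $$ (p div n, p mod n)"

lemma vH_divmod: "vH (\<lambda>p. f (p div n) (p mod n)) = (\<Sum>i<n. \<Sum>j<n. f i j *\<^sub>R Lam (x i) (y j))"
  unfolding vH_def Lp_def using sum_divmod[of "\<lambda>i j. f i j *\<^sub>R Lam (x i) (y j)" n] by simp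

lemma phi_rho: assumes s: "s \<in> {1,2}" and i: "i \<in> fold_set fl n s"
  shows "phr (3-s) (x i) (a i) (y i) = sqrt (2 * ns s) *\<^sub>R vH (rho s i)"
proof -
  have il: "i < n" and fli: "fl i = s" using i by (auto simp: fold_set_def)
  have np: "ns s > 0" using ns_pos s .
  have sq: "sqrt (2 * ns s) * sqrt (2 * ns s) = 2 * ns s" using np by simp
  have sq2: "sqrt (2 * ns s) * sqrt (2 / ns s) = 2"
    using np by (simp add: real_sqrt_mult[symmetric])
  have "sqrt (2 * ns s) *\<^sub>R vH (rho s i) = sqrt (2 * ns s) *\<^sub>R (\<Sum>m<n. \<Sum>j<n.
      ((if m = i then D s $$ (i, j) else 0) - V s $$ (m, j)) *\<^sub>R Lam (x m) (y j))"
    unfolding rho_def by (subst vH_divmod[of "\<lambda>m j. (if m = i then D s $$ (i, j) else 0) - V s $$ (m, j)", symmetric]) (rule refl)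
  also have "\<dots> = (\<Sum>m<n. \<Sum>j<n. (if m = i then sqrt (2 * ns s) * D s $$ (i, j) else 0) *\<^sub>R Lam (x m) (y j))
     - (\<Sum>m<n. \<Sum>j<n. (sqrt (2 * ns s) * V s $$ (m, j)) *\<^sub>R Lam (x m) (y j))"
    by (simp only: scaleR_sum_right sum_subtractf[symmetric]) (intro sum.cong refl; auto simp: algebra_simps)
  also have "(\<Sum>m<n. \<Sum>j<n. (if m = i then sqrt (2 * ns s) * D s $$ (i, j) else 0) *\<^sub>R Lam (x m) (y j))
     = (\<Sum>m<n. if m = i then (\<Sum>j<n. (2 * ns s * C $$ (i, j)) *\<^sub>R Lam (x m) (y j)) else 0)"
  proof (intro sum.cong refl)
    fix m assume "m \<in> {..<n}"
    show "(\<Sum>j<n. (if m = i then sqrt (2 * ns s) * D s $$ (i, j) else 0) *\<^sub>R Lam (x m) (y j))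
       = (if m = i then (\<Sum>j<n. (2 * ns s * C $$ (i, j)) *\<^sub>R Lam (x m) (y j)) else 0)"
      using il sq by (auto simp: Dmat_def fli intro!: sum.cong)
  qed
  also have "\<dots> = (\<Sum>j<n. (2 * ns s * C $$ (i, j)) *\<^sub>R Lam (x i) (y j))"
    using il by simp
  also have "(\<Sum>m<n. \<Sum>j<n. (sqrt (2 * ns s) * V s $$ (m, j)) *\<^sub>R Lam (x m) (y j))
     = (\<Sum>m<n. \<Sum>j<n. (if fl m = s then 2 * Emat x n fl beta $$ (m,j) else 0) *\<^sub>R Lam (x m) (y j))"
  proof (intro sum.cong refl)
    fix m j assume "m \<in> {..<n}" "j \<in> {..<n}"
    then show "(sqrt (2 * ns s) * V s $$ (m, j)) *\<^sub>R Lam (x m) (y j)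
       = (if fl m = s then 2 * Emat x n fl beta $$ (m,j) else 0) *\<^sub>R Lam (x m) (y j)"
      using sq2 by (auto simp: Vmat_def mult.assoc[symmetric])
  qed
  finally show ?thesis using phi_C[OF s i] psi_E[OF s] by simp
qed


definition Sg :: "'h \<Rightarrow> 'h" where
  "Sg h = (\<Sum>i\<in>fold_set fl n 1. inner (vH (rho 1 i)) h *\<^sub>R vH (rho 1 i))
        + (\<Sum>i\<in>fold_set fl n 2. inner (vH (rho 2 i)) h *\<^sub>R vH (rho 2 i))"

lemma Sigma_one: assumes s: "s \<in> {1,2}"
  shows "(1 / ns s) *\<^sub>R (\<Sum>i\<in>fold_set fl n s.
      inner (phr (3-s) (x i) (a i) (y i)) h *\<^sub>R phr (3-s) (x i) (a i) (y i))
    = 2 *\<^sub>R (\<Sum>i\<in>fold_set fl n s. inner (vH (rho s i)) h *\<^sub>R vH (rho s i))"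
proof -
  have np: "ns s > 0" using ns_pos s .
  have sq: "sqrt (2 * ns s) * sqrt (2 * ns s) = 2 * ns s" using np by simp
  have "(\<Sum>i\<in>fold_set fl n s.
      inner (phr (3-s) (x i) (a i) (y i)) h *\<^sub>R phr (3-s) (x i) (a i) (y i))
     = (\<Sum>i\<in>fold_set fl n s. (2 * ns s) *\<^sub>R (inner (vH (rho s i)) h *\<^sub>R vH (rho s i)))"
  proof (intro sum.cong refl)
    fix i assume i: "i \<in> fold_set fl n s"
    show "inner (phr (3-s) (x i) (a i) (y i)) h *\<^sub>R phr (3-s) (x i) (a i) (y i)
       = (2 * ns s) *\<^sub>R (inner (vH (rho s i)) h *\<^sub>R vH (rho s i))"
    proof -
      have e: "(c * I) * c = (c * c) * I" for c I :: real by simp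
      show ?thesis unfolding phi_rho[OF s i] inner_scaleR_left scaleR_scaleR e sq ..
    qed
  qed
  moreover have "(1 / ns s) * (2 * ns s * I) = 2 * I" for I using np by simp
  ultimately show ?thesis by (simp only: scaleR_sum_right scaleR_scaleR)
qed

lemma Sigma_Sg: "Sigma_n Lam x a y n fl ps beta h = Sg h"
  unfolding Sigma_n_def Sg_def using Sigma_one[of 1 h] Sigma_one[of 2 h]
  by (simp add: add.commute scaleR_add_right)


abbreviation "W s \<equiv> Wmat x a n fl ps beta s"
abbreviation "S s \<equiv> Smat x a n fl ps beta s"
abbreviation "Gm \<equiv> Gmat k l x y n"
definition Upp :: "real mat" where
  "Upp = hcat (S 1) (hcat (S 2) (hcat (col_mat (vecr (V 1))) (hcat (col_mat (vecr (V 2)))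
     (hcat (col_mat (vecr (W 1))) (col_mat (vecr (W 2)))))))"

lemma dims[simp]: "dim_row (D s) = n" "dim_col (D s) = n" "dim_row (V s) = n" "dim_col (V s) = n"
  "dim_row (W s) = n" "dim_col (W s) = n" "dim_row (S s) = n * n" "dim_col (S s) = n"
  "dim_row Gm = n * n" "dim_col Gm = n * n" "dim_row C = n" "dim_col C = n"
  by (auto simp: Dmat_def Vmat_def Wmat_def Smat_def face_split_def Gmat_def kron_def Kmat_def Cmat_def)

lemma S_index: "p < n * n \<Longrightarrow> i < n \<Longrightarrow> S s $$ (p, i) = (if p div n = i then D s $$ (i, p mod n) else 0)"
proof -
  assume p: "p < n * n" and i: "i < n"
  have "p div n < n" using p by (simp add: less_mult_imp_div_less)
  then show ?thesis using p i by (auto simp: Smat_def face_split_def)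
qed

lemma G_index: "p < n * n \<Longrightarrow> q < n * n \<Longrightarrow> Gm $$ (p, q) = inner (Lp p) (Lp q)"
proof -
  assume p: "p < n * n" and q: "q < n * n"
  have "p div n < n" "q div n < n" using p q by (auto simp: less_mult_imp_div_less)
  moreover have "n > 0" using p by (cases n) auto
  then have "p mod n < n" "q mod n < n" by auto
  ultimately show ?thesis using p q
    by (simp add: Gmat_def kron_def Kmat_def Lp_def Lam_def tensor_inner k_feat l_feat)
qed

lemma T_eq: "Tmat k l x a y n fl ps beta = Gm * Upp"
  unfolding Tmat_def Upp_def Let_def by (simp add: mult_hcat')

lemma Upp_carrier: "Upp \<in> carrier_mat (n*n) (2*n+4)"
  unfolding Upp_def carrier_mat_def by simp

lemma U_carrier: "Umat x a n fl ps beta \<in> carrier_mat (n*n) (2*n+4)"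
  unfolding Umat_def carrier_mat_def by simp

lemma Mm_eq: "Upp * transpose_mat (Umat x a n fl ps beta) =
   S 1 * transpose_mat (S 1) + (S 2 * transpose_mat (S 2) +
   (col_mat (vecr (V 1)) * transpose_mat (- col_mat (vecr (D 1))) +
   (col_mat (vecr (V 2)) * transpose_mat (- col_mat (vecr (D 2))) +
   (col_mat (vecr (W 1)) * transpose_mat (- col_mat (vecr (V 1))) +
    col_mat (vecr (W 2)) * transpose_mat (- col_mat (vecr (V 2)))))))"
  unfolding Upp_def Umat_def by (simp add: hcat_mult_transpose')


lemma D_zero: "i < n \<Longrightarrow> j < n \<Longrightarrow> fl i \<noteq> s \<Longrightarrow> D s $$ (i,j) = 0"
  by (simp add: Dmat_def)

lemma sumF_S: assumes t: "t < n * n"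
  shows "(\<Sum>i\<in>fold_set fl n s. S s $$ (t, i)) = D s $$ (t div n, t mod n)"
proof -
  have n: "n > 0" using t by (cases n) auto
  have td: "t div n < n" using t by (simp add: less_mult_imp_div_less)
  have tm: "t mod n < n" using n by simp
  have "(\<Sum>i\<in>fold_set fl n s. S s $$ (t, i)) = (\<Sum>i\<in>fold_set fl n s. if t div n = i then D s $$ (i, t mod n) else 0)"
    using t by (intro sum.cong refl) (simp add: S_index fold_lt)
  also have "\<dots> = (if t div n \<in> fold_set fl n s then D s $$ (t div n, t mod n) else 0)"
    using fin_fold by (simp add: sum.delta)
  also have "\<dots> = D s $$ (t div n, t mod n)"
    using D_zero[OF td tm] td by (auto simp: fold_set_def)
  finally show ?thesis .
qed

lemma sumn_SS: assumes t: "t < n * n" and q: "q < n * n"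
  shows "(\<Sum>i<n. S s $$ (t, i) * S s $$ (q, i)) = (\<Sum>i\<in>fold_set fl n s. S s $$ (t, i) * S s $$ (q, i))"
proof (rule sum.mono_neutral_right)
  show "fold_set fl n s \<subseteq> {..<n}" by (auto simp: fold_set_def)
  show "\<forall>i\<in>{..<n} - fold_set fl n s. S s $$ (t, i) * S s $$ (q, i) = 0"
  proof
    fix i assume i: "i \<in> {..<n} - fold_set fl n s"
    then have il: "i < n" and fi: "fl i \<noteq> s" by (auto simp: fold_set_def)
    have n: "n > 0" using t by (cases n) auto
    have "S s $$ (t, i) = 0" using t il D_zero[OF il _ fi] n by (simp add: S_index)
    then show "S s $$ (t, i) * S s $$ (q, i) = 0" by simp
  qed
qed simp

lemma ent_s: assumes t: "t < n * n" and q: "q < n * n" and s: "s \<in> {1,2}"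
  shows "(S s * transpose_mat (S s)) $$ (t,q)
    + (col_mat (vecr (V s)) * transpose_mat (- col_mat (vecr (D s)))) $$ (t,q)
    + (col_mat (vecr (W s)) * transpose_mat (- col_mat (vecr (V s)))) $$ (t,q)
    = (\<Sum>i\<in>fold_set fl n s. rho s i t * rho s i q)"
proof -
  have n: "n > 0" using t by (cases n) auto
  have td: "t div n < n" "q div n < n" using t q by (auto simp: less_mult_imp_div_less)
  have tm: "t mod n < n" "q mod n < n" using n by auto
  have rho_S: "rho s i p = S s $$ (p, i) - V s $$ (p div n, p mod n)" if "i \<in> fold_set fl n s" "p < n * n" for i p
    using that by (simp add: rho_def S_index fold_lt)
  have "(\<Sum>i\<in>fold_set fl n s. rho s i t * rho s i q) =
     (\<Sum>i\<in>fold_set fl n s. (S s $$ (t, i) - V s $$ (t div n, t mod n)) * (S s $$ (q, i) - V s $$ (q div n, q mod n)))"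
    using t q by (intro sum.cong refl) (simp add: rho_S)
  also have "\<dots> = (\<Sum>i<n. S s $$ (t, i) * S s $$ (q, i))
      - V s $$ (q div n, q mod n) * D s $$ (t div n, t mod n)
      - V s $$ (t div n, t mod n) * D s $$ (q div n, q mod n)
      + ns s * V s $$ (t div n, t mod n) * V s $$ (q div n, q mod n)"
    unfolding sum_prod_expand sumF_S[OF t] sumF_S[OF q] sumn_SS[OF t q] nf_def ..
  also have "\<dots> = (S s * transpose_mat (S s)) $$ (t,q)
    + (col_mat (vecr (V s)) * transpose_mat (- col_mat (vecr (D s)))) $$ (t,q)
    + (col_mat (vecr (W s)) * transpose_mat (- col_mat (vecr (V s)))) $$ (t,q)"
  proof -
    have e1: "(S s * transpose_mat (S s)) $$ (t,q) = (\<Sum>i<n. S s $$ (t, i) * S s $$ (q, i))"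
      using t q by (subst mult_transpose_index) auto
    have e2: "(col_mat (vecr (V s)) * transpose_mat (- col_mat (vecr (D s)))) $$ (t,q)
       = - (V s $$ (t div n, t mod n) * D s $$ (q div n, q mod n))"
      using t q by (subst mult_transpose_index) auto
    have e3: "(col_mat (vecr (W s)) * transpose_mat (- col_mat (vecr (V s)))) $$ (t,q)
       = - ((D s $$ (t div n, t mod n) - ns s * V s $$ (t div n, t mod n)) * V s $$ (q div n, q mod n))"
      using t q td tm by (subst mult_transpose_index) (auto simp: Wmat_def)
    show ?thesis unfolding e1 e2 e3 by (simp add: algebra_simps)
  qed
  finally show ?thesis by simp
qed

lemma Mm_index: assumes t: "t < n * n" and q: "q < n * n"
  shows "(Upp * transpose_mat (Umat x a n fl ps beta)) $$ (t,q) =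
    (\<Sum>i\<in>fold_set fl n 1. rho 1 i t * rho 1 i q) + (\<Sum>i\<in>fold_set fl n 2. rho 2 i t * rho 2 i q)"
proof -
  have s1: "(1::nat) \<in> {1,2}" and s2: "(2::nat) \<in> {1,2}" by auto
  have "(Upp * transpose_mat (Umat x a n fl ps beta)) $$ (t,q) =
   (S 1 * transpose_mat (S 1)) $$ (t,q) + ((S 2 * transpose_mat (S 2)) $$ (t,q) +
   ((col_mat (vecr (V 1)) * transpose_mat (- col_mat (vecr (D 1)))) $$ (t,q) +
   ((col_mat (vecr (V 2)) * transpose_mat (- col_mat (vecr (D 2)))) $$ (t,q) +
   ((col_mat (vecr (W 1)) * transpose_mat (- col_mat (vecr (V 1)))) $$ (t,q) +
    (col_mat (vecr (W 2)) * transpose_mat (- col_mat (vecr (V 2)))) $$ (t,q)))))"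
    unfolding Mm_eq using t q by (simp del: index_mult_mat(1))
  then show ?thesis using ent_s[OF t q s1] ent_s[OF t q s2] by linarith
qed


lemma G_sym: "p < n * n \<Longrightarrow> q < n * n \<Longrightarrow> Gm $$ (p, q) = Gm $$ (q, p)"
  by (simp add: G_index inner_commute)

lemma inner_Lp_vH: "t < n * n \<Longrightarrow> inner (Lp t) (vH w) = (\<Sum>q<n*n. Gm $$ (t,q) * w q)"
  unfolding vH_def by (simp add: inner_sum_right G_index mult_ac)

lemma inner_vH: "inner (vH u) (vH w) = (\<Sum>p<n*n. \<Sum>q<n*n. u p * Gm $$ (p,q) * w q)"
proof -
  have "inner (vH u) (vH w) = (\<Sum>p<n*n. u p * inner (Lp p) (vH w))"
    unfolding vH_def[of u] inner_sum_left inner_scaleR_left ..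
  also have "\<dots> = (\<Sum>p<n*n. \<Sum>q<n*n. u p * Gm $$ (p,q) * w q)"
    by (intro sum.cong refl) (simp add: inner_Lp_vH sum_distrib_left mult_ac)
  finally show ?thesis .
qed

lemma vH_sum: "vH (\<lambda>q. \<Sum>i\<in>A. f i * g i q) = (\<Sum>i\<in>A. f i *\<^sub>R vH (g i))"
  unfolding vH_def by (simp add: scaleR_sum_right sum_distrib_right scaleR_scaleR sum.swap[of _ A] scaleR_sum_left)

lemma vH_add: "vH (\<lambda>q. f q + g q) = vH f + vH g"
  unfolding vH_def by (simp add: scaleR_add_left sum.distrib)

lemma vH_scale: "vH (\<lambda>q. c * f q) = c *\<^sub>R vH f"
  unfolding vH_def by (simp add: scaleR_sum_right)

lemma vH_diff: "vH (\<lambda>q. f q - g q) = vH f - vH g"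
  unfolding vH_def by (simp add: scaleR_diff_left sum_subtractf)

lemma sum_mid_distrib: "c1 * (\<Sum>i\<in>F. f i) * c2 = (\<Sum>i\<in>F. c1 * f i * (c2::real))"
  by (simp add: sum_distrib_left sum_distrib_right)

lemma quad_form: "(\<Sum>p<N. \<Sum>q<N. g p * (\<Sum>i\<in>F. r i p * r i q) * (g q::real)) = (\<Sum>i\<in>F. (\<Sum>p<N. r i p * g p)\<^sup>2)"
proof -
  have "(\<Sum>p<N. \<Sum>q<N. g p * (\<Sum>i\<in>F. r i p * r i q) * g q) = (\<Sum>p<N. \<Sum>q<N. \<Sum>i\<in>F. (r i p * g p) * (r i q * g q))"
    by (intro sum.cong refl) (simp add: sum_distrib_left mult_ac)
  also have "\<dots> = (\<Sum>p<N. \<Sum>i\<in>F. \<Sum>q<N. (r i p * g p) * (r i q * g q))"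
    by (simp add: sum.swap[of _ F])
  also have "\<dots> = (\<Sum>i\<in>F. \<Sum>p<N. \<Sum>q<N. (r i p * g p) * (r i q * g q))"
    by (rule sum.swap)
  also have "\<dots> = (\<Sum>i\<in>F. (\<Sum>p<N. r i p * g p)\<^sup>2)"
    by (simp add: power2_eq_square sum_product)
  finally show ?thesis .
qed


abbreviation "Um \<equiv> Umat x a n fl ps beta"

lemma Mm_quad: "(\<Sum>p<n*n. \<Sum>t<n*n. g p * (Upp * transpose_mat Um) $$ (p,t) * g t)
   = (\<Sum>i\<in>fold_set fl n 1. (\<Sum>p<n*n. rho 1 i p * g p)\<^sup>2) + (\<Sum>i\<in>fold_set fl n 2. (\<Sum>p<n*n. rho 2 i p * g p)\<^sup>2)"
proof -
  have "(\<Sum>p<n*n. \<Sum>t<n*n. g p * (Upp * transpose_mat Um) $$ (p,t) * g t)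
     = (\<Sum>p<n*n. \<Sum>t<n*n. g p * (\<Sum>i\<in>fold_set fl n 1. rho 1 i p * rho 1 i t) * g t)
     + (\<Sum>p<n*n. \<Sum>t<n*n. g p * (\<Sum>i\<in>fold_set fl n 2. rho 2 i p * rho 2 i t) * g t)"
    by (simp add: Mm_index algebra_simps sum.distrib)
  then show ?thesis by (simp only: quad_form)
qed

lemma X_kernel:
  assumes e: "0 < e" "e < 1" and v: "v \<in> carrier_vec (2*n+4)"
    and Xv: "(e \<cdot>\<^sub>m 1\<^sub>m (2*n+4) + (1-e) \<cdot>\<^sub>m (transpose_mat Um * Tmat k l x a y n fl ps beta)) *\<^sub>v v = 0\<^sub>v (2*n+4)"
  shows "v = 0\<^sub>v (2*n+4)"
proof -
  let ?K = "2*n+4" and ?N = "n*n"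
  have Uc: "Um \<in> carrier_mat ?N ?K" by (rule U_carrier)
  have Pc: "Upp \<in> carrier_mat ?N ?K" by (rule Upp_carrier)
  have Gc: "Gm \<in> carrier_mat ?N ?N" by (rule carrier_matI) simp_all
  define u where "u = Upp *\<^sub>v v"
  define g where "g = Gm *\<^sub>v u"
  define z where "z = transpose_mat Um *\<^sub>v g"
  have uc: "u \<in> carrier_vec ?N" unfolding u_def using mult_mat_vec_carrier[OF Pc v] .
  have gc: "g \<in> carrier_vec ?N" unfolding g_def using mult_mat_vec_carrier[OF Gc uc] .
  have Utc: "transpose_mat Um \<in> carrier_mat ?K ?N" using Uc by simp
  have zc: "z \<in> carrier_vec ?K" unfolding z_def using mult_mat_vec_carrier[OF Utc gc] .
  have UTv: "(transpose_mat Um * Tmat k l x a y n fl ps beta) *\<^sub>v v = z"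
    unfolding T_eq z_def g_def u_def
    using assoc_mult_mat_vec[OF Utc mult_carrier_mat[OF Gc Pc] v] assoc_mult_mat_vec[OF Gc Pc v] by simp
  have ev: "e * v $ r + (1-e) * z $ r = 0" if r: "r < ?K" for r
  proof -
    have "(e \<cdot>\<^sub>m 1\<^sub>m ?K + (1-e) \<cdot>\<^sub>m (transpose_mat Um * Tmat k l x a y n fl ps beta)) *\<^sub>v v
       = e \<cdot>\<^sub>v v + (1-e) \<cdot>\<^sub>v ((transpose_mat Um * Tmat k l x a y n fl ps beta) *\<^sub>v v)"
      using Uc Pc Gc v unfolding T_eq
      by (subst add_mult_distrib_mat_vec[of _ ?K ?K]) (auto intro!: eq_vecI)
    from arg_cong[OF this[unfolded Xv UTv], of "\<lambda>w. w $ r"] show ?thesis using r v zc by simp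
  qed
  have ez: "v $ r = - ((1-e)/e) * z $ r" if "r < ?K" for r
    using ev[OF that] e by (simp add: field_simps)
  have eu: "e * u $ p = - (1-e) * (\<Sum>t<?N. (Upp * transpose_mat Um) $$ (p,t) * g $ t)" if p: "p < ?N" for p
  proof -
    have "e * u $ p = e * (\<Sum>r<?K. Upp $$ (p,r) * v $ r)"
      unfolding u_def using p Pc v by (subst mult_mat_vec_index) auto
    also have "\<dots> = - (1-e) * (\<Sum>r<?K. Upp $$ (p,r) * z $ r)"
    proof -
      have "e * (\<Sum>r<?K. Upp $$ (p,r) * v $ r) = (\<Sum>r<?K. Upp $$ (p,r) * (e * v $ r))"
        by (simp add: sum_distrib_left mult_ac)
      also have "\<dots> = (\<Sum>r<?K. Upp $$ (p,r) * (- (1-e) * z $ r))"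
      proof (intro sum.cong refl)
        fix r assume "r \<in> {..<?K}"
        then have "e * v $ r = - (1-e) * z $ r" using ev[of r] by (auto simp: algebra_simps)
        then show "Upp $$ (p,r) * (e * v $ r) = Upp $$ (p,r) * (- (1-e) * z $ r)" by simp
      qed
      finally show ?thesis by (simp add: sum_distrib_left mult_ac)
    qed
    also have "(\<Sum>r<?K. Upp $$ (p,r) * z $ r) = (\<Sum>r<?K. Upp $$ (p,r) * (\<Sum>t<?N. Um $$ (t,r) * g $ t))"
      unfolding z_def using Uc gc by (intro sum.cong refl) (subst mult_mat_vec_index, auto)
    also have "\<dots> = (\<Sum>t<?N. (\<Sum>r<?K. Upp $$ (p,r) * Um $$ (t,r)) * g $ t)"
      by (simp add: sum_distrib_left sum_distrib_right mult_ac sum.swap[of _ "{..<?N}"])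
    also have "\<dots> = (\<Sum>t<?N. (Upp * transpose_mat Um) $$ (p,t) * g $ t)"
      using p Pc Uc by (intro sum.cong refl) (subst mult_transpose_index, auto)
    finally show ?thesis .
  qed
  have "e * (\<Sum>p<?N. g $ p * u $ p) = - (1-e) * (\<Sum>p<?N. \<Sum>t<?N. g $ p * (Upp * transpose_mat Um) $$ (p,t) * g $ t)"
  proof -
    have "e * (\<Sum>p<?N. g $ p * u $ p) = (\<Sum>p<?N. g $ p * (e * u $ p))"
      by (simp add: sum_distrib_left mult_ac)
    also have "\<dots> = (\<Sum>p<?N. g $ p * (- (1-e) * (\<Sum>t<?N. (Upp * transpose_mat Um) $$ (p,t) * g $ t)))"
      by (intro sum.cong refl) (simp add: eu)
    also have "\<dots> = - (1-e) * (\<Sum>p<?N. \<Sum>t<?N. g $ p * (Upp * transpose_mat Um) $$ (p,t) * g $ t)"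
      by (simp add: sum_distrib_left mult_ac)
    finally show ?thesis .
  qed
  also have "\<dots> \<le> 0" unfolding Mm_quad using e by (intro mult_nonpos_nonneg) (auto intro!: add_nonneg_nonneg sum_nonneg)
  finally have le: "e * (\<Sum>p<?N. g $ p * u $ p) \<le> 0" .
  have gu: "(\<Sum>p<?N. g $ p * u $ p) = inner (vH (\<lambda>p. u $ p)) (vH (\<lambda>p. u $ p))"
    unfolding inner_vH g_def using Gc uc
    by (intro sum.cong refl) (subst mult_mat_vec_index, auto simp: sum_distrib_left mult_ac)
  have "inner (vH (\<lambda>p. u $ p)) (vH (\<lambda>p. u $ p)) \<le> 0" using le e unfolding gu
    by (simp add: mult_le_0_iff)
  then have vu: "vH (\<lambda>p. u $ p) = 0" by (metis inner_gt_zero_iff linorder_not_le)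
  have g0: "g $ t = 0" if t: "t < ?N" for t
  proof -
    have "g $ t = inner (Lp t) (vH (\<lambda>p. u $ p))"
      unfolding inner_Lp_vH[OF t] g_def using Gc uc t by (subst mult_mat_vec_index) auto
    then show ?thesis using vu by simp
  qed
  have z0: "z $ r = 0" if r: "r < ?K" for r
    unfolding z_def using Uc gc r g0 by (subst mult_mat_vec_index) auto
  show ?thesis using v ez z0 by (intro eq_vecI) auto
qed


lemma minv_X:
  assumes e: "0 < e" "e < 1"
  defines "X \<equiv> e \<cdot>\<^sub>m 1\<^sub>m (2*n+4) + (1-e) \<cdot>\<^sub>m (transpose_mat Um * Tmat k l x a y n fl ps beta)"
  shows "minv X \<in> carrier_mat (2*n+4) (2*n+4) \<and> minv X * X = 1\<^sub>m (2*n+4)"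
proof -
  let ?K = "2*n+4"
  have Tc: "Tmat k l x a y n fl ps beta \<in> carrier_mat (n*n) ?K"
    unfolding T_eq by (rule mult_carrier_mat[OF _ Upp_carrier]) (rule carrier_matI, simp_all)
  have Utc: "transpose_mat Um \<in> carrier_mat ?K (n*n)" using U_carrier by simp
  have Xc: "X \<in> carrier_mat ?K ?K" unfolding X_def
    by (intro add_carrier_mat smult_carrier_mat one_carrier_mat mult_carrier_mat[OF Utc Tc])
  have "det X \<noteq> 0"
  proof
    assume "det X = 0"
    then obtain v where v: "v \<in> carrier_vec ?K" "v \<noteq> 0\<^sub>v ?K" "X *\<^sub>v v = 0\<^sub>v ?K"
      using det_0_iff_vec_prod_zero[OF Xc] by auto
    then show False using X_kernel[OF e v(1)] unfolding X_def by auto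
  qed
  then have unit: "X \<in> Units (ring_mat TYPE(real) ?K undefined)" by (rule det_non_zero_imp_unit[OF Xc])
  show ?thesis
  proof (cases "mat_inverse X")
    case None
    then show ?thesis using mat_inverse(1)[OF Xc, of undefined] unit by auto
  next
    case (Some B)
    then show ?thesis using mat_inverse(2)[OF Xc Some] unfolding minv_def by auto
  qed
qed


lemma vH_cong: "(\<And>q. q < n * n \<Longrightarrow> f q = g q) \<Longrightarrow> vH f = vH g"
  unfolding vH_def by (intro sum.cong refl) auto

lemma Sg_diff: "Sg h1 - Sg h2 = Sg (h1 - h2)"
  unfolding Sg_def by (simp add: inner_diff_right scaleR_diff_left sum_subtractf algebra_simps)

lemma Sg_nonneg: "inner (Sg h) h \<ge> 0"
proof -
  have "inner (Sg h) h = (\<Sum>i\<in>fold_set fl n 1. (inner (vH (rho 1 i)) h)\<^sup>2) + (\<Sum>i\<in>fold_set fl n 2. (inner (vH (rho 2 i)) h)\<^sup>2)"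
    unfolding Sg_def by (simp add: inner_add_left inner_sum_left power2_eq_square)
  also have "\<dots> \<ge> 0" by (intro add_nonneg_nonneg sum_nonneg) auto
  finally show ?thesis .
qed

lemma f_inj: assumes e: "0 < e" "e < 1"
  shows "inj (\<lambda>h. (1 - e) *\<^sub>R Sigma_n Lam x a y n fl ps beta h + e *\<^sub>R h)"
proof (rule injI)
  fix h1 h2 assume eq: "(1 - e) *\<^sub>R Sigma_n Lam x a y n fl ps beta h1 + e *\<^sub>R h1 = (1 - e) *\<^sub>R Sigma_n Lam x a y n fl ps beta h2 + e *\<^sub>R h2"
  define d where "d = h1 - h2"
  have "(1 - e) *\<^sub>R Sg d + e *\<^sub>R d = 0"
  proof -
    have "(1 - e) *\<^sub>R Sg h1 + e *\<^sub>R h1 - ((1 - e) *\<^sub>R Sg h2 + e *\<^sub>R h2) = 0"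
      using eq unfolding Sigma_Sg by simp
    then show ?thesis unfolding d_def Sg_diff[symmetric] by (simp add: algebra_simps)
  qed
  then have "inner ((1 - e) *\<^sub>R Sg d + e *\<^sub>R d) d = 0" by simp
  then have "(1 - e) * inner (Sg d) d + e * inner d d = 0" by (simp add: inner_add_left)
  moreover have "(1 - e) * inner (Sg d) d \<ge> 0" using e Sg_nonneg by simp
  ultimately have "e * inner d d \<le> 0" by linarith
  then have "inner d d \<le> 0" using e by (simp add: mult_le_0_iff)
  then have "d = 0" by (metis inner_gt_zero_iff linorder_not_le)
  then show "h1 = h2" unfolding d_def by simp
qed

lemma main:
  assumes e: "0 < eps" "eps < 1" and B_dim: "B \<in> carrier_mat n n"
    and B_coef: "mat_of_row (vecr B) = mat_of_row (vecr C) * Omega_tilde eps k l x a y n fl ps beta"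
  shows "Omega_n eps Lam x a y n fl ps beta (psibar Lam x a y n fl ps beta)
           = (\<Sum>i<n. \<Sum>j<n. (B $$ (i, j)) *\<^sub>R Lam (x i) (y j))"
proof -
  let ?K = "2*n+4" and ?N = "n*n"
  let ?T = "Tmat k l x a y n fl ps beta"
  define X where "X = eps \<cdot>\<^sub>m 1\<^sub>m ?K + (1-eps) \<cdot>\<^sub>m (transpose_mat Um * ?T)"
  define Y where "Y = eps \<cdot>\<^sub>m 1\<^sub>m ?N + (1-eps) \<cdot>\<^sub>m (?T * transpose_mat Um)"
  define Om where "Om = Omega_tilde eps k l x a y n fl ps beta"
  define b where "b = (\<lambda>p. vecr B $ p)"
  define c where "c = (\<lambda>p. vecr C $ p)"
  have Gc: "Gm \<in> carrier_mat ?N ?N" by (rule carrier_matI) simp_all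
  have Tc: "?T \<in> carrier_mat ?N ?K"
    unfolding T_eq by (rule mult_carrier_mat[OF Gc Upp_carrier])
  have Uc: "Um \<in> carrier_mat ?N ?K" by (rule U_carrier)
  have Utc: "transpose_mat Um \<in> carrier_mat ?K ?N" using U_carrier by simp
  have mX: "minv X \<in> carrier_mat ?K ?K" "minv X * X = 1\<^sub>m ?K"
    using minv_X[OF e] unfolding X_def by auto
  have Om_eq: "Om = (1/eps) \<cdot>\<^sub>m 1\<^sub>m ?N - ((1-eps)/eps) \<cdot>\<^sub>m (?T * minv X * transpose_mat Um)"
    unfolding Om_def Omega_tilde_def Let_def X_def ..
  have OmY: "Om * Y = 1\<^sub>m ?N"
    unfolding Om_eq Y_def using e
    by (intro woodbury_left[OF Tc Uc mX(1)]) (use mX(2) X_def in auto)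
  have Omc: "Om \<in> carrier_mat ?N ?N" unfolding Om_eq
    by (intro minus_carrier_mat smult_carrier_mat one_carrier_mat mult_carrier_mat[OF mult_carrier_mat[OF Tc mX(1)] Utc])
  have Yc: "Y \<in> carrier_mat ?N ?N" unfolding Y_def
    by (intro add_carrier_mat smult_carrier_mat one_carrier_mat mult_carrier_mat[OF Tc Utc])
  have rc: "mat_of_row (vecr C) \<in> carrier_mat 1 ?N" by (rule carrier_matI) simp_all
  have rowY: "mat_of_row (vecr B) * Y = mat_of_row (vecr C)"
    unfolding B_coef Om_def[symmetric] using assoc_mult_mat[OF rc Omc Yc] OmY rc by simp
  have TU: "?T * transpose_mat Um = Gm * (Upp * transpose_mat Um)"
    unfolding T_eq using Gc Upp_carrier Utc by (rule assoc_mult_mat)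
  define kap where "kap = (\<lambda>q. (\<Sum>i\<in>fold_set fl n 1. inner (vH (rho 1 i)) (vH b) * rho 1 i q)
       + (\<Sum>i\<in>fold_set fl n 2. inner (vH (rho 2 i)) (vH b) * rho 2 i q))"
  have cq: "c q = eps * b q + (1 - eps) * kap q" if q: "q < ?N" for q
  proof -
    have "c q = (mat_of_row (vecr B) * Y) $$ (0, q)" unfolding rowY c_def using q by simp
    also have "\<dots> = (\<Sum>p<?N. b p * Y $$ (p, q))"
      unfolding b_def using q Yc B_dim by (subst mult_index) auto
    also have "\<dots> = (\<Sum>p<?N. (if p = q then eps * b p else 0) + (1-eps) * (b p * (\<Sum>t<?N. Gm $$ (p,t) * (Upp * transpose_mat Um) $$ (t,q))))"
    proof (intro sum.cong refl)
      fix p assume p: "p \<in> {..<?N}"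
      have "(?T * transpose_mat Um) $$ (p, q) = (\<Sum>t<?N. Gm $$ (p,t) * (Upp * transpose_mat Um) $$ (t,q))"
        unfolding TU using p q Upp_carrier Utc by (subst mult_index) auto
      then show "b p * Y $$ (p, q) = (if p = q then eps * b p else 0) + (1-eps) * (b p * (\<Sum>t<?N. Gm $$ (p,t) * (Upp * transpose_mat Um) $$ (t,q)))"
        unfolding Y_def using p q Tc Utc by (simp add: algebra_simps)
    qed
    also have "\<dots> = eps * b q + (1 - eps) * (\<Sum>p<?N. b p * (\<Sum>t<?N. Gm $$ (p,t) * (Upp * transpose_mat Um) $$ (t,q)))"
      using q by (simp add: sum.distrib sum_distrib_left)
    also have "(\<Sum>p<?N. b p * (\<Sum>t<?N. Gm $$ (p,t) * (Upp * transpose_mat Um) $$ (t,q))) = kap q"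
    proof -
      have "(\<Sum>p<?N. b p * (\<Sum>t<?N. Gm $$ (p,t) * (Upp * transpose_mat Um) $$ (t,q)))
        = (\<Sum>p<?N. b p * (\<Sum>t<?N. Gm $$ (p,t) * (\<Sum>i\<in>fold_set fl n 1. rho 1 i t * rho 1 i q)))
        + (\<Sum>p<?N. b p * (\<Sum>t<?N. Gm $$ (p,t) * (\<Sum>i\<in>fold_set fl n 2. rho 2 i t * rho 2 i q)))"
        using q by (simp add: Mm_index algebra_simps sum.distrib)
      also have "\<dots> = kap q"
        unfolding kap_def inner_vH
        by (simp only: sum_swap_sym[where G = "\<lambda>p t. Gm $$ (p,t)", OF G_sym])
      finally show ?thesis .
    qed
    finally show ?thesis .
  qed
  have vHc: "vH c = eps *\<^sub>R vH b + (1 - eps) *\<^sub>R Sg (vH b)"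
  proof -
    have "vH c = vH (\<lambda>q. eps * b q + (1 - eps) * kap q)" by (rule vH_cong) (rule cq)
    also have "\<dots> = eps *\<^sub>R vH b + (1 - eps) *\<^sub>R vH kap" by (simp add: vH_add vH_scale)
    also have "vH kap = Sg (vH b)" unfolding kap_def Sg_def vH_add vH_sum ..
    finally show ?thesis .
  qed
  have ps: "psibar Lam x a y n fl ps beta = vH c"
  proof -
    have "vH c = vH (\<lambda>p. C $$ (p div n, p mod n))" unfolding c_def by (rule vH_cong) simp
    then show ?thesis unfolding psibar_C using vH_divmod[of "\<lambda>i j. C $$ (i,j)"] by simp
  qed
  have vb: "vH b = (\<Sum>i<n. \<Sum>j<n. (B $$ (i, j)) *\<^sub>R Lam (x i) (y j))"
  proof -
    have "vH b = vH (\<lambda>p. B $$ (p div n, p mod n))" unfolding b_def using B_dim by (intro vH_cong) auto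
    then show ?thesis using vH_divmod[of "\<lambda>i j. B $$ (i,j)"] by simp
  qed
  have fb: "(\<lambda>h. (1 - eps) *\<^sub>R Sigma_n Lam x a y n fl ps beta h + eps *\<^sub>R h) (vH b) = psibar Lam x a y n fl ps beta"
    unfolding ps vHc Sigma_Sg by simp
  show ?thesis unfolding Omega_n_def fb[symmetric] inv_into_f_f[OF f_inj[OF e] UNIV_I] vb ..
qed

end
theorem lemmaH5:
  fixes k :: "'x \<Rightarrow> 'x \<Rightarrow> real" and l :: "'y \<Rightarrow> 'y \<Rightarrow> real"
    and Kf :: "'x \<Rightarrow> 'hx::real_inner" and Lf :: "'y \<Rightarrow> 'hy::real_inner"
    and tensor :: "'hx \<Rightarrow> 'hy \<Rightarrow> 'h::real_inner"
    and Lam :: "'x \<Rightarrow> 'y \<Rightarrow> 'h"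
    and n :: nat and x :: "nat \<Rightarrow> 'x" and a :: "nat \<Rightarrow> bool" and y :: "nat \<Rightarrow> 'y"
    and fl :: "nat \<Rightarrow> nat"
    and ps :: "nat \<Rightarrow> 'x \<Rightarrow> real"
    and beta :: "nat \<Rightarrow> bool \<Rightarrow> 'x \<Rightarrow> nat \<Rightarrow> real"
    and eps :: real and B :: "real mat"
  assumes k_feat: "\<And>u v. k u v = inner (Kf u) (Kf v)"
    and l_feat: "\<And>u v. l u v = inner (Lf u) (Lf v)"
    and k_bdd: "\<exists>M. \<forall>u. k u u \<le> M"
    and l_bdd: "\<exists>M. \<forall>v. l v v \<le> M"
    and tensor_inner: "\<And>f g f' g'. inner (tensor f g) (tensor f' g') = inner f f' * inner g g'"
    and Lam_def: "\<And>u v. Lam u v = tensor (Kf u) (Lf v)"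
    and folds: "\<forall>i<n. fl i \<in> {1, 2}"
    and fold1_ne: "fold_set fl n 1 \<noteq> {}" and fold2_ne: "fold_set fl n 2 \<noteq> {}"
    and pi_range: "\<And>r u. r \<in> {1, 2} \<Longrightarrow> 0 < ps r u \<and> ps r u < 1"
    and beta_zero: "\<And>r b u j. r \<in> {1, 2} \<Longrightarrow> j \<notin> fold_set fl n r \<or> a j \<noteq> b \<Longrightarrow> beta r b u j = 0"
    and eps_range: "0 < eps" "eps < 1"
    and B_dim: "B \<in> carrier_mat n n"
    and B_coef: "mat_of_row (vecr B)
                   = mat_of_row (vecr (Cmat x a n fl ps beta)) * Omega_tilde eps k l x a y n fl ps beta"
  shows "Omega_n eps Lam x a y n fl ps beta (psibar Lam x a y n fl ps beta)
           = (\<Sum>i<n. \<Sum>j<n. (B $$ (i, j)) *\<^sub>R Lam (x i) (y j))"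
proof -
  interpret setting k l Kf Lf tensor Lam n x a y fl ps beta
    by (rule setting.intro[OF k_feat l_feat tensor_inner Lam_def folds fold1_ne fold2_ne pi_range beta_zero])
  show ?thesis by (rule main[OF eps_range B_dim B_coef])
qed

end
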